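(* Consider the ODE $$w_r=\frac{2w^3+2w-\sqrt3(1+w^2)^{3/2}}{r},\qquad r>0.$$ Its solutions are, up to restriction to subintervals, exactly the following: (1) the constant $w\equiv\sqrt3$; (2) for each $\rho_0>0$, $w(r)=\dfrac{r^2+\frac{\sqrt3}{2}\rho_0^2}{\sqrt{\rho_0^4-(r^2+\frac{\sqrt3}{2}\rho_0^2)^2}}$ on $0<r<r_0:=\sqrt{\frac{2-\sqrt3}{2}}\rho_0$; it satisfies $w>\sqrt3$, $w(r)\to\sqrt3$ as $r\to0$, $w(r)\to+\infty$ as $r\to r_0$, and for fixed $r$, $w(r)\to\sqrt3$ as $\rho_0\to\infty$; (3) for each $a>0$ (equivalently $\rho_0>0$ with $a^2=\frac{\sqrt3}{2}\rho_0^2$), $w(r)=\dfrac{-\sqrt3(r^2-a^2)}{\sqrt{4a^4-3(r^2-a^2)^2}}=\dfrac{-(r^2-\frac{\sqrt3}{2}\rho_0^2)}{\sqrt{\rho_0^4-(r^2-\frac{\sqrt3}{2}\rho_0^2)^2}}$ on $0<r<b:=\sqrt{\frac{2+\sqrt3}{\sqrt3}}\,a=\sqrt{\frac{2+\sqrt3}{2}}\rho_0$; it satisfies $w(a)=0$, $w<\sqrt3$, $w(r)\to\sqrt3$ as $r\to0$, $w(r)\to-\infty$ as $r\to b$, and for fixed $r$, $w(r)\to\sqrt3$ as $a\to\infty$.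
   Context: This ODE arises from $v_r=\frac{2v^3+3r^2v-\sqrt3(v^2+r^2)^{3/2}}{r^3}$ with $v=u_r$, $w=v/r$, for rotationally symmetric absolute $E_1$-minimizing graphs $t=u(r)$ in the Heisenberg group. *)

theory Defs
  imports "HOL-Analysis.Analysis"
begin

definition ode_rhs :: "real \<Rightarrow> real \<Rightarrow> real" where
  "ode_rhs r w = (2 * w ^ 3 + 2 * w - sqrt 3 * (1 + w\<^sup>2) powr (3/2)) / r"

definition solves_on :: "(real \<Rightarrow> real) \<Rightarrow> real set \<Rightarrow> bool" where
  "solves_on w I \<longleftrightarrow> I \<subseteq> {0<..} \<and>
     (\<forall>r\<in>I. (w has_real_derivative ode_rhs r (w r)) (at r))"

definition w_plus :: "real \<Rightarrow> real \<Rightarrow> real" where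
  "w_plus \<rho> r = (r\<^sup>2 + sqrt 3 / 2 * \<rho>\<^sup>2) / sqrt (\<rho> ^ 4 - (r\<^sup>2 + sqrt 3 / 2 * \<rho>\<^sup>2)\<^sup>2)"

definition r0 :: "real \<Rightarrow> real" where
  "r0 \<rho> = sqrt ((2 - sqrt 3) / 2) * \<rho>"

definition w_minus :: "real \<Rightarrow> real \<Rightarrow> real" where
  "w_minus a r = - sqrt 3 * (r\<^sup>2 - a\<^sup>2) / sqrt (4 * a ^ 4 - 3 * (r\<^sup>2 - a\<^sup>2)\<^sup>2)"

definition b_end :: "real \<Rightarrow> real" where
  "b_end a = sqrt ((2 + sqrt 3) / sqrt 3) * a"

end

theory Submission
  imports Defs
begin


definition phi :: "real \<Rightarrow> real" where "phi u = u / sqrt (1 - u\<^sup>2)"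

lemma powr32: "(x::real) > 0 \<Longrightarrow> x powr (3/2) = x * sqrt x"
proof -
  assume x: "x > 0"
  have "x powr (3/2) = x powr (1 + 1/2)" by simp
  also have "\<dots> = x * x powr (1/2)" using x by (subst powr_add) simp
  also have "\<dots> = x * sqrt x" using x by (simp add: powr_half_sqrt)
  finally show ?thesis .
qed

lemma phi_deriv:
  assumes "-1 < u" "u < 1"
  shows "(phi has_real_derivative 1 / (sqrt (1 - u\<^sup>2))^3) (at u)"
proof -
  have q: "1 - u\<^sup>2 > 0" using assms by (simp add: abs_square_less_1)
  have d1: "((\<lambda>u. 1 - u\<^sup>2) has_real_derivative (-2*u)) (at u)"
    by (auto intro!: derivative_eq_intros)
  have d2: "((\<lambda>u. sqrt (1 - u\<^sup>2)) has_real_derivative (inverse (sqrt (1 - u\<^sup>2)) / 2 * (-2*u))) (at u)"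
    using DERIV_chain2[OF DERIV_real_sqrt[OF q] d1] .
  have d3: "((\<lambda>u. u / sqrt (1 - u\<^sup>2)) has_real_derivative
     (1 * sqrt (1 - u\<^sup>2) - (inverse (sqrt (1 - u\<^sup>2)) / 2 * (-2*u)) * u) / (sqrt (1 - u\<^sup>2)) ^ Suc (Suc 0)) (at u)"
    by (rule DERIV_quotient[OF DERIV_ident d2]) (use q in simp)
  define s where "s = sqrt (1 - u\<^sup>2)"
  have s: "s > 0" "s\<^sup>2 = 1 - u\<^sup>2" using q by (auto simp: s_def)
  have e: "(1 * s - (inverse s / 2 * (-2*u)) * u) / s ^ Suc (Suc 0) = (s\<^sup>2 + u\<^sup>2) / s^3"
    using s(1) by (simp add: field_simps power2_eq_square power3_eq_cube)
  have e2: "(1 * s - (inverse s / 2 * (-2*u)) * u) / s ^ Suc (Suc 0) = 1 / s^3"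
    unfolding e s(2) by simp
  show ?thesis using d3 unfolding phi_def[abs_def] s_def[symmetric] e2 .
qed

lemma u_bounds: "-1 < W / sqrt (1 + W\<^sup>2) \<and> W / sqrt (1 + W\<^sup>2) < (1::real)"
proof -
  have "\<bar>W\<bar> = sqrt (W\<^sup>2)" by simp
  also have "\<dots> < sqrt (1 + W\<^sup>2)" by (rule real_sqrt_less_mono) simp
  finally have "\<bar>W\<bar> < sqrt (1 + W\<^sup>2)" .
  moreover have "sqrt (1 + W\<^sup>2) > 0" by (simp add: add_pos_nonneg)
  ultimately show ?thesis by (auto simp: field_simps abs_less_iff)
qed

lemma phi_of: "phi (W / sqrt (1 + W\<^sup>2)) = W"
proof -
  define p where "p = sqrt (1 + W\<^sup>2)"
  have p: "p > 0" "p\<^sup>2 = 1 + W\<^sup>2" by (auto simp: p_def add_pos_nonneg)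
  have "1 - (W / p)\<^sup>2 = (p\<^sup>2 - W\<^sup>2) / p\<^sup>2" using p(1) by (simp add: field_simps)
  also have "\<dots> = 1 / p\<^sup>2" using p(2) by simp
  also have "\<dots> = (1 / p)\<^sup>2" by (simp add: power_divide)
  finally have "1 - (W / p)\<^sup>2 = (1 / p)\<^sup>2" .
  hence "sqrt (1 - (W / p)\<^sup>2) = 1 / p" using p by simp
  thus ?thesis unfolding phi_def p_def[symmetric] using p by simp
qed

lemma ode_q:
  assumes q: "q > 0" "q\<^sup>2 = 1 - u\<^sup>2" and r: "r \<noteq> 0"
  shows "ode_rhs r (u / q) = 2 * (u - sqrt 3 / 2) / (r * q^3)"
proof -
  have e: "1 + (u / q)\<^sup>2 = 1 / q\<^sup>2"
  proof -
    have "1 + (u / q)\<^sup>2 = (q\<^sup>2 + u\<^sup>2) / q\<^sup>2" using q(1) by (simp add: field_simps)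
    thus ?thesis unfolding q(2) by simp
  qed
  have sq: "sqrt (1 / q\<^sup>2) = 1 / q" using q(1) by (simp add: real_sqrt_divide)
  have p: "(1 + (u / q)\<^sup>2) powr (3/2) = 1 / q ^ 3" unfolding e
  proof -
    have "(1 / q\<^sup>2) powr (3/2) = 1 / q\<^sup>2 * sqrt (1 / q\<^sup>2)" using q(1) by (intro powr32) simp
    also have "\<dots> = 1 / q\<^sup>2 * (1 / q)" unfolding sq ..
    also have "\<dots> = 1 / q^3" by (simp add: power2_eq_square power3_eq_cube)
    finally show "(1 / q\<^sup>2) powr (3/2) = 1 / q^3" .
  qed
  have "2 * (u / q) ^ 3 + 2 * (u / q) - sqrt 3 * (1 / q ^ 3) = (2 * u^3 + 2 * u * q\<^sup>2 - sqrt 3) / q^3"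
    using q by (simp add: field_simps power3_eq_cube power2_eq_square)
  also have "\<dots> = 2 * (u - sqrt 3 / 2) / q^3" unfolding q(2) by (simp add: algebra_simps power3_eq_cube power2_eq_square)
  finally show ?thesis unfolding ode_rhs_def p using r by simp
qed

lemma ode_phi:
  assumes "-1 < u" "u < 1" "r \<noteq> 0"
  shows "ode_rhs r (phi u) = 2 * (u - sqrt 3 / 2) / (r * (sqrt (1 - u\<^sup>2))^3)"
proof -
  have q0: "1 - u\<^sup>2 > 0" using assms by (simp add: abs_square_less_1)
  show ?thesis unfolding phi_def by (rule ode_q) (use q0 assms in auto)
qed



lemma solves_phi:
  assumes "I \<subseteq> {0<..}" "\<And>r. r \<in> I \<Longrightarrow> -1 < sqrt 3 / 2 + k * r\<^sup>2 \<and> sqrt 3 / 2 + k * r\<^sup>2 < 1"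
  shows "solves_on (\<lambda>r. phi (sqrt 3 / 2 + k * r\<^sup>2)) I"
  unfolding solves_on_def
proof (intro conjI ballI)
  show "I \<subseteq> {0<..}" by fact
  fix r assume r: "r \<in> I"
  define u where "u = sqrt 3 / 2 + k * r\<^sup>2"
  have u: "-1 < u" "u < 1" using assms(2)[OF r] by (auto simp: u_def)
  have r0: "r > 0" using r assms(1) by auto
  have du: "((\<lambda>r. sqrt 3 / 2 + k * r\<^sup>2) has_real_derivative (k * (2 * r))) (at r)"
    by (auto intro!: derivative_eq_intros)
  have "((\<lambda>r. phi (sqrt 3 / 2 + k * r\<^sup>2)) has_real_derivative
      1 / (sqrt (1 - u\<^sup>2))^3 * (k * (2 * r))) (at r)"
    using DERIV_chain2[OF phi_deriv[OF u, unfolded u_def] du] unfolding u_def .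
  moreover have "1 / (sqrt (1 - u\<^sup>2))^3 * (k * (2 * r)) = ode_rhs r (phi u)"
    unfolding ode_phi[OF u r0[THEN less_imp_neq, symmetric]] using r0
    by (simp add: u_def field_simps power2_eq_square)
  ultimately show "((\<lambda>r. phi (sqrt 3 / 2 + k * r\<^sup>2)) has_real_derivative
      ode_rhs r (phi (sqrt 3 / 2 + k * r\<^sup>2))) (at r)" unfolding u_def by simp
qed

lemma rho_phi:
  assumes "\<rho> > 0"
  shows "(t + sqrt 3 / 2 * \<rho>\<^sup>2) / sqrt (\<rho> ^ 4 - (t + sqrt 3 / 2 * \<rho>\<^sup>2)\<^sup>2) = phi (sqrt 3 / 2 + t / \<rho>\<^sup>2)"
proof -
  define v where "v = sqrt 3 / 2 + t / \<rho>\<^sup>2"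
  have n: "t + sqrt 3 / 2 * \<rho>\<^sup>2 = \<rho>\<^sup>2 * v" using assms by (simp add: v_def field_simps)
  have "\<rho> ^ 4 - (\<rho>\<^sup>2 * v)\<^sup>2 = (\<rho>\<^sup>2)\<^sup>2 * (1 - v\<^sup>2)" by (simp add: algebra_simps power2_eq_square power4_eq_xxxx)
  moreover have "sqrt ((\<rho>\<^sup>2)\<^sup>2) = \<rho>\<^sup>2" by (rule real_sqrt_abs[THEN trans]) simp
  ultimately have d: "sqrt (\<rho> ^ 4 - (\<rho>\<^sup>2 * v)\<^sup>2) = \<rho>\<^sup>2 * sqrt (1 - v\<^sup>2)" by (simp only: real_sqrt_mult)
  show ?thesis unfolding n d phi_def v_def[symmetric] using assms by simp
qed

lemma wplus_phi: "\<rho> > 0 \<Longrightarrow> w_plus \<rho> r = phi (sqrt 3 / 2 + r\<^sup>2 / \<rho>\<^sup>2)"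
  unfolding w_plus_def by (rule rho_phi)

lemma wminus_phi:
  assumes a: "a > 0"
  shows "w_minus a r = phi (sqrt 3 / 2 * (1 - r\<^sup>2 / a\<^sup>2))"
proof -
  define v where "v = sqrt 3 / 2 * (1 - r\<^sup>2 / a\<^sup>2)"
  have n: "- sqrt 3 * (r\<^sup>2 - a\<^sup>2) = 2 * a\<^sup>2 * v" using a by (simp add: v_def field_simps)
  have v2: "v\<^sup>2 = 3 / 4 * (1 - r\<^sup>2 / a\<^sup>2)\<^sup>2" by (simp add: v_def power_mult_distrib power_divide)
  have "4 * a ^ 4 - 3 * (r\<^sup>2 - a\<^sup>2)\<^sup>2 = (2 * a\<^sup>2)\<^sup>2 * (1 - v\<^sup>2)"
    unfolding v2 using a by (simp add: field_simps power2_eq_square power4_eq_xxxx)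
  moreover have "sqrt ((2 * a\<^sup>2)\<^sup>2) = 2 * a\<^sup>2" by (rule real_sqrt_abs[THEN trans]) simp
  ultimately have d: "sqrt (4 * a ^ 4 - 3 * (r\<^sup>2 - a\<^sup>2)\<^sup>2) = 2 * a\<^sup>2 * sqrt (1 - v\<^sup>2)" by (simp only: real_sqrt_mult)
  show ?thesis unfolding w_minus_def n d phi_def v_def[symmetric] using a by simp
qed

lemma phi_c: "phi (sqrt 3 / 2) = sqrt 3"
proof -
  have "1 - (sqrt 3 / 2)\<^sup>2 = (1/2)\<^sup>2" by (simp add: power_divide)
  hence "sqrt (1 - (sqrt 3 / 2)\<^sup>2) = 1/2" by simp
  thus ?thesis unfolding phi_def by (simp only:) simp
qed

lemma phi_gt:
  assumes "sqrt 3 / 2 < u" "u < 1" shows "phi u > sqrt 3"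
proof -
  have c0: "sqrt 3 / 2 > 0" by simp
  have u0: "u > 0" using assms(1) c0 by linarith
  have "u\<^sup>2 > (sqrt 3 / 2)\<^sup>2" using assms(1) c0 by (intro power_strict_mono) auto
  hence "1 - u\<^sup>2 < (1/2)\<^sup>2" by (simp add: power_divide)
  hence q: "sqrt (1 - u\<^sup>2) < 1/2" using real_sqrt_less_mono by fastforce
  have q0: "sqrt (1 - u\<^sup>2) > 0" using assms u0 by (simp add: abs_square_less_1)
  have "sqrt 3 = (sqrt 3 / 2) / (1/2)" by simp
  also have "\<dots> < u / (1/2)" using assms(1) by simp
  also have "\<dots> < u / sqrt (1 - u\<^sup>2)" using q q0 u0 by (intro divide_strict_left_mono) auto
  finally show ?thesis unfolding phi_def .
qed

lemma phi_lt:
  assumes "-1 < u" "u < sqrt 3 / 2" shows "phi u < sqrt 3"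
proof (cases "u \<le> 0")
  case True
  have "phi u \<le> 0" unfolding phi_def using True assms(1) by (intro divide_nonpos_nonneg) (auto simp: abs_square_le_1)
  moreover have "sqrt 3 > 0" by simp
  ultimately show ?thesis by linarith
next
  case False
  hence u0: "u > 0" by simp
  have "u\<^sup>2 < (sqrt 3 / 2)\<^sup>2" using assms(2) u0 by (simp add: power_strict_mono)
  hence "1 - u\<^sup>2 > (1/2)\<^sup>2" by (simp add: power_divide)
  hence q: "sqrt (1 - u\<^sup>2) > 1/2" using real_sqrt_less_mono by fastforce
  have q0: "sqrt (1 - u\<^sup>2) > 0" using q by linarith
  have "u / sqrt (1 - u\<^sup>2) < u / (1/2)" using q q0 u0 by (intro divide_strict_left_mono) auto
  also have "\<dots> < (sqrt 3 / 2) / (1/2)" using assms(2) by simp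
  also have "\<dots> = sqrt 3" by simp
  finally show ?thesis unfolding phi_def .
qed

lemma phi_isCont: "-1 < u \<Longrightarrow> u < 1 \<Longrightarrow> isCont phi u"
  using phi_deriv DERIV_isCont by blast



lemma val_alg:
  fixes p r W D s :: real
  assumes p: "p > 0" "p\<^sup>2 = 1 + W\<^sup>2" and r: "r > 0" and Dr: "D * r = 2 * W * p\<^sup>2 - s * p^3"
  shows "((D * p - (inverse p / 2 * (2 * W * D)) * W) / p ^ Suc (Suc 0) * r\<^sup>2 - 2 * r * (W / p - s / 2)) / (r\<^sup>2) ^ Suc (Suc 0) = 0"
proof -
  have Du: "(D * p - (inverse p / 2 * (2 * W * D)) * W) / p ^ Suc (Suc 0) = D / p^3"
  proof -
    have "(D * p - (inverse p / 2 * (2 * W * D)) * W) = D * (p\<^sup>2 - W\<^sup>2) / p"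
      using p(1) by (simp add: field_simps power2_eq_square)
    also have "\<dots> = D / p" using p(2) by simp
    finally show ?thesis by (simp add: power3_eq_cube power2_eq_square)
  qed
  have "D / p^3 * r\<^sup>2 = (D * r) / p^3 * r" by (simp add: power2_eq_square)
  also have "\<dots> = (2 * W * p\<^sup>2 - s * p^3) / p^3 * r" unfolding Dr ..
  also have "(2 * W * p\<^sup>2 - s * p^3) / p^3 = 2 * (W / p - s / 2)"
    using p(1) by (simp add: field_simps power2_eq_square power3_eq_cube)
  finally have "D / p^3 * r\<^sup>2 = 2 * r * (W / p - s / 2)" by simp
  thus ?thesis unfolding Du by simp
qed

lemma K_deriv:
  assumes r0: "r > 0" and dw: "(w has_real_derivative ode_rhs r (w r)) (at r)"
  shows "((\<lambda>x. (w x / sqrt (1 + (w x)\<^sup>2) - sqrt 3 / 2) / x\<^sup>2) has_real_derivative 0) (at r)"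
proof -
  define W where "W = w r"
  define p where "p = sqrt (1 + W\<^sup>2)"
  define D where "D = ode_rhs r W"
  have p: "p > 0" "p\<^sup>2 = 1 + W\<^sup>2" by (auto simp: p_def add_pos_nonneg)
  have pp: "1 + (w r)\<^sup>2 > 0" by (simp add: add_pos_nonneg)
  have d1: "((\<lambda>x. 1 + (w x)\<^sup>2) has_real_derivative 2 * W * D) (at r)"
    unfolding W_def D_def by (auto intro!: derivative_eq_intros dw)
  have d2: "((\<lambda>x. sqrt (1 + (w x)\<^sup>2)) has_real_derivative (inverse p / 2 * (2 * W * D))) (at r)"
    using DERIV_chain2[OF DERIV_real_sqrt[OF pp] d1] unfolding p_def W_def .
  have d3: "((\<lambda>x. w x / sqrt (1 + (w x)\<^sup>2)) has_real_derivative
      (D * p - (inverse p / 2 * (2 * W * D)) * W) / p ^ Suc (Suc 0)) (at r)"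
    using DERIV_quotient[OF dw d2] p(1) unfolding p_def W_def D_def by simp
  have d4: "((\<lambda>x. w x / sqrt (1 + (w x)\<^sup>2) - sqrt 3 / 2) has_real_derivative
      (D * p - (inverse p / 2 * (2 * W * D)) * W) / p ^ Suc (Suc 0)) (at r)"
    using DERIV_diff[OF d3 DERIV_const[of "sqrt 3 / 2"]] by simp
  have d5: "((\<lambda>x. x\<^sup>2) has_real_derivative 2 * r) (at r)"
    by (auto intro!: derivative_eq_intros)
  note d6 = DERIV_quotient[OF d4 d5]
  have Dr: "D * r = 2 * W * p\<^sup>2 - sqrt 3 * p^3"
  proof -
    have pw0: "(1 + W\<^sup>2) powr (3/2) = (1 + W\<^sup>2) * sqrt (1 + W\<^sup>2)"
      by (rule powr32) (simp add: add_pos_nonneg)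
    have pw: "(1 + W\<^sup>2) powr (3/2) = p\<^sup>2 * p" using pw0 by (simp only: p_def[symmetric] p(2))
    have p3: "p^3 = p\<^sup>2 * p" by (simp add: power3_eq_cube power2_eq_square)
    have "D * r = 2 * W ^ 3 + 2 * W - sqrt 3 * (p\<^sup>2 * p)" unfolding D_def ode_rhs_def pw using r0 by simp
    also have "\<dots> = 2 * W * p\<^sup>2 - sqrt 3 * p^3" unfolding p3 p(2) by (simp add: algebra_simps power3_eq_cube power2_eq_square)
    finally show ?thesis .
  qed
  have val: "((D * p - (inverse p / 2 * (2 * W * D)) * W) / p ^ Suc (Suc 0) * r\<^sup>2 -
      2 * r * (W / p - sqrt 3 / 2)) / (r\<^sup>2) ^ Suc (Suc 0) = 0"
    by (rule val_alg[OF p r0 Dr])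
  have rr: "r\<^sup>2 \<noteq> 0" using r0 by simp
  show ?thesis
    by (rule DERIV_cong[OF d6[OF rr]]) (use val in \<open>simp only: W_def[symmetric] p_def[symmetric]\<close>)
qed



lemma classify:
  assumes "open I" "connected I" "I \<noteq> {}" "solves_on w I"
  shows "(\<forall>r\<in>I. w r = sqrt 3)
     \<or> (\<exists>\<rho>>0. I \<subseteq> {0<..<r0 \<rho>} \<and> (\<forall>r\<in>I. w r = w_plus \<rho> r))
     \<or> (\<exists>a>0. I \<subseteq> {0<..<b_end a} \<and> (\<forall>r\<in>I. w r = w_minus a r))"
proof -
  have I0: "I \<subseteq> {0<..}" and dw: "\<And>r. r \<in> I \<Longrightarrow> (w has_real_derivative ode_rhs r (w r)) (at r)"
    using assms(4) unfolding solves_on_def by auto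
  define K where "K x = (w x / sqrt (1 + (w x)\<^sup>2) - sqrt 3 / 2) / x\<^sup>2" for x
  have cvx: "convex I" using assms(2) by (simp add: is_interval_convex_1[symmetric] is_interval_connected_1)
  have "\<exists>k. \<forall>x\<in>I. K x = k"
  proof (rule has_field_derivative_zero_constant[OF cvx])
    fix x assume x: "x \<in> I"
    have "(K has_real_derivative 0) (at x)" unfolding K_def[abs_def]
      using K_deriv[OF _ dw[OF x]] x I0 by auto
    thus "(K has_field_derivative 0) (at x within I)" by (rule has_field_derivative_at_within)
  qed
  then obtain k where k: "\<And>x. x \<in> I \<Longrightarrow> K x = k" by blast
  have ueq: "w x / sqrt (1 + (w x)\<^sup>2) = sqrt 3 / 2 + k * x\<^sup>2" if x: "x \<in> I" for x
  proof -
    have "x > 0" using x I0 by auto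
    thus ?thesis using k[OF x] unfolding K_def by (simp add: field_simps)
  qed
  have weq: "w x = phi (sqrt 3 / 2 + k * x\<^sup>2)" if "x \<in> I" for x
    using phi_of[of "w x"] ueq[OF that] by simp
  have bnd: "-1 < sqrt 3 / 2 + k * x\<^sup>2 \<and> sqrt 3 / 2 + k * x\<^sup>2 < 1" if "x \<in> I" for x
    using u_bounds[of "w x"] ueq[OF that] by simp
  consider "k = 0" | "k > 0" | "k < 0" by linarith
  thus ?thesis
  proof cases
    case 1
    thus ?thesis using weq phi_c by simp
  next
    case 2
    define \<rho> where "\<rho> = 1 / sqrt k"
    have \<rho>: "\<rho> > 0" using 2 by (simp add: \<rho>_def)
    have k\<rho>: "1 / \<rho>\<^sup>2 = k" using 2 by (simp add: \<rho>_def power_divide)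
    have r0\<rho>: "r0 \<rho> = sqrt ((1 - sqrt 3 / 2) / k)"
    proof -
      have e: "(2 - sqrt 3) / 2 = 1 - sqrt 3 / 2" by simp
      show ?thesis unfolding r0_def \<rho>_def real_sqrt_divide e by simp
    qed
    have "I \<subseteq> {0<..<r0 \<rho>}"
    proof
      fix x assume x: "x \<in> I"
      have x0: "x > 0" using x I0 by auto
      have "k * x\<^sup>2 < 1 - sqrt 3 / 2" using bnd[OF x] by linarith
      hence "x\<^sup>2 < (1 - sqrt 3 / 2) / k" using 2 by (simp add: field_simps)
      hence "x < r0 \<rho>" unfolding r0\<rho> by (rule real_less_rsqrt)
      thus "x \<in> {0<..<r0 \<rho>}" using x0 by simp
    qed
    moreover have "\<forall>r\<in>I. w r = w_plus \<rho> r"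
      using weq wplus_phi[OF \<rho>] k\<rho> by (auto simp: field_simps)
    ultimately show ?thesis using \<rho> by blast
  next
    case 3
    define a where "a = sqrt (sqrt 3 / 2 / (- k))"
    have a: "a > 0" using 3 unfolding a_def by (intro real_sqrt_gt_zero divide_pos_pos) auto
    have "sqrt 3 / 2 / (- k) \<ge> 0" using 3 by (intro divide_nonneg_pos) auto
    hence a2: "a\<^sup>2 = sqrt 3 / 2 / (- k)" unfolding a_def by (rule real_sqrt_pow2)
    have ba: "b_end a = sqrt ((1 + sqrt 3 / 2) / (- k))"
    proof -
      have "b_end a = sqrt ((2 + sqrt 3) / sqrt 3 * (sqrt 3 / 2 / (- k)))"
        unfolding b_end_def a_def by (simp only: real_sqrt_mult)
      also have "(2 + sqrt 3) / sqrt 3 * (sqrt 3 / 2 / (- k)) = (1 + sqrt 3 / 2) / (- k)"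
        using 3 by (simp add: field_simps)
      finally show ?thesis .
    qed
    have "I \<subseteq> {0<..<b_end a}"
    proof
      fix x assume x: "x \<in> I"
      have x0: "x > 0" using x I0 by auto
      have "- k * x\<^sup>2 < 1 + sqrt 3 / 2" using bnd[OF x] by linarith
      hence "x\<^sup>2 < (1 + sqrt 3 / 2) / (- k)" using 3 by (simp add: field_simps)
      hence "x < b_end a" unfolding ba by (rule real_less_rsqrt)
      thus "x \<in> {0<..<b_end a}" using x0 by simp
    qed
    moreover have "\<forall>r\<in>I. w r = w_minus a r"
    proof
      fix r assume r: "r \<in> I"
      have "sqrt 3 / 2 * (1 - r\<^sup>2 / a\<^sup>2) = sqrt 3 / 2 + k * r\<^sup>2"
        unfolding a2 using 3 by (simp add: field_simps)
      thus "w r = w_minus a r" using weq[OF r] wminus_phi[OF a, of r] by (simp only:)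
    qed
    ultimately show ?thesis using a by blast
  qed
qed



lemma sqrt3_less2: "sqrt 3 < 2"
  using real_less_lsqrt[of 2 3] by simp

lemma sqrt3_pos: "sqrt 3 > 0" by simp

lemma inv_sq_lim: "((\<lambda>x::real. y / x\<^sup>2) \<longlongrightarrow> 0) at_top"
  by (rule tendsto_divide_0[OF tendsto_const], rule filterlim_at_top_imp_at_infinity,
      rule filterlim_pow_at_top) (auto intro: filterlim_ident)

lemma phi_top:
  assumes "(u \<longlongrightarrow> 1) F" "eventually (\<lambda>x. -1 < u x \<and> u x < 1) F"
  shows "filterlim (\<lambda>x. phi (u x)) at_top F"
  unfolding phi_def
proof (rule LIM_at_top_divide[OF assms(1)])
  show "((\<lambda>x. sqrt (1 - (u x)\<^sup>2)) \<longlongrightarrow> 0) F"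
    using tendsto_real_sqrt[OF tendsto_diff[OF tendsto_const tendsto_power[OF assms(1), of 2]], of 1] by simp
  show "eventually (\<lambda>x. 0 < sqrt (1 - (u x)\<^sup>2)) F"
    using assms(2) by eventually_elim (simp add: abs_square_less_1 abs_less_iff)
qed simp

lemma phi_odd: "phi (- u) = - phi u" unfolding phi_def by simp

lemma phi_bot:
  assumes "(u \<longlongrightarrow> -1) F" "eventually (\<lambda>x. -1 < u x \<and> u x < 1) F"
  shows "filterlim (\<lambda>x. phi (u x)) at_bot F"
proof -
  have "filterlim (\<lambda>x. phi (- u x)) at_top F"
    by (rule phi_top) (use tendsto_minus[OF assms(1)] assms(2) in \<open>auto elim: eventually_mono\<close>)
  thus ?thesis unfolding filterlim_uminus_at_bot phi_odd .
qed

lemma phi_lim_c: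
  assumes "(u \<longlongrightarrow> sqrt 3 / 2) F"
  shows "((\<lambda>x. phi (u x)) \<longlongrightarrow> sqrt 3) F"
proof -
  have h: "-1 < sqrt 3 / 2" "sqrt 3 / 2 < 1" using sqrt3_less2 sqrt3_pos by linarith+
  have "isCont phi (sqrt 3 / 2)" by (rule phi_isCont[OF h])
  from isCont_tendsto_compose[OF this assms] show ?thesis unfolding phi_c .
qed

lemma r0_sq: "\<rho> > 0 \<Longrightarrow> (r0 \<rho>)\<^sup>2 = (1 - sqrt 3 / 2) * \<rho>\<^sup>2"
  unfolding r0_def using sqrt3_less2 by (simp add: power_mult_distrib diff_divide_distrib)

lemma r0_pos: "\<rho> > 0 \<Longrightarrow> r0 \<rho> > 0"
  unfolding r0_def by (intro mult_pos_pos real_sqrt_gt_zero) (auto simp: sqrt3_less2)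

lemma b_sq: "a > 0 \<Longrightarrow> (b_end a)\<^sup>2 = (2 + sqrt 3) / sqrt 3 * a\<^sup>2"
  unfolding b_end_def by (simp add: power_mult_distrib)

lemma b_pos: "a > 0 \<Longrightarrow> b_end a > 0"
  unfolding b_end_def by (intro mult_pos_pos real_sqrt_gt_zero divide_pos_pos) (auto intro: add_pos_pos)



lemma c_bounds: "-1 < sqrt 3 / 2" "sqrt 3 / 2 < (1::real)"
  using sqrt3_less2 sqrt3_pos by linarith+

lemma const_sol: "solves_on (\<lambda>_. sqrt 3) {0<..}"
proof -
  have "solves_on (\<lambda>r. phi (sqrt 3 / 2 + 0 * r\<^sup>2)) {0<..}"
    by (rule solves_phi) (use c_bounds in auto)
  thus ?thesis by (simp add: phi_c)
qed

lemma plus_props: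
  assumes \<rho>: "\<rho> > 0"
  shows "solves_on (w_plus \<rho>) {0<..<r0 \<rho>}
        \<and> (\<forall>r\<in>{0<..<r0 \<rho>}. w_plus \<rho> r > sqrt 3)
        \<and> (w_plus \<rho> \<longlongrightarrow> sqrt 3) (at_right 0)
        \<and> filterlim (w_plus \<rho>) at_top (at_left (r0 \<rho>))"
proof -
  define k where "k = 1 / \<rho>\<^sup>2"
  have k: "k > 0" using \<rho> by (simp add: k_def)
  have fe: "w_plus \<rho> = (\<lambda>r. phi (sqrt 3 / 2 + k * r\<^sup>2))"
    by (rule ext) (simp add: wplus_phi[OF \<rho>] k_def)
  have ub: "sqrt 3 / 2 < sqrt 3 / 2 + k * r\<^sup>2 \<and> sqrt 3 / 2 + k * r\<^sup>2 < 1" if r: "r \<in> {0<..<r0 \<rho>}" for r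
  proof -
    have "r\<^sup>2 < (r0 \<rho>)\<^sup>2" using r by (intro power_strict_mono) auto
    hence "k * r\<^sup>2 < k * (r0 \<rho>)\<^sup>2" using k by simp
    also have "k * (r0 \<rho>)\<^sup>2 = 1 - sqrt 3 / 2" unfolding r0_sq[OF \<rho>] k_def using \<rho> by simp
    finally have "k * r\<^sup>2 < 1 - sqrt 3 / 2" .
    moreover have "k * r\<^sup>2 > 0" using k r by simp
    ultimately show ?thesis by linarith
  qed
  have s: "solves_on (w_plus \<rho>) {0<..<r0 \<rho>}"
    unfolding fe by (rule solves_phi) (use ub c_bounds in fastforce)+
  have g: "\<forall>r\<in>{0<..<r0 \<rho>}. w_plus \<rho> r > sqrt 3"
    unfolding fe using ub by (auto intro!: phi_gt)
  have l0: "(w_plus \<rho> \<longlongrightarrow> sqrt 3) (at_right 0)"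
  proof -
    have "((\<lambda>r. sqrt 3 / 2 + k * r\<^sup>2) \<longlongrightarrow> sqrt 3 / 2 + k * 0\<^sup>2) (at_right 0)"
      by (intro tendsto_intros)
    thus ?thesis unfolding fe by (intro phi_lim_c) simp
  qed
  have l1: "filterlim (w_plus \<rho>) at_top (at_left (r0 \<rho>))"
    unfolding fe
  proof (rule phi_top)
    have "((\<lambda>r. sqrt 3 / 2 + k * r\<^sup>2) \<longlongrightarrow> sqrt 3 / 2 + k * (r0 \<rho>)\<^sup>2) (at_left (r0 \<rho>))"
      by (intro tendsto_intros)
    moreover have "sqrt 3 / 2 + k * (r0 \<rho>)\<^sup>2 = 1" unfolding r0_sq[OF \<rho>] k_def using \<rho> by simp
    ultimately show "((\<lambda>r. sqrt 3 / 2 + k * r\<^sup>2) \<longlongrightarrow> 1) (at_left (r0 \<rho>))" by simp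
    show "eventually (\<lambda>r. -1 < sqrt 3 / 2 + k * r\<^sup>2 \<and> sqrt 3 / 2 + k * r\<^sup>2 < 1) (at_left (r0 \<rho>))"
      using eventually_at_left_real[OF r0_pos[OF \<rho>]] by eventually_elim (use ub c_bounds in fastforce)
  qed
  show ?thesis using s g l0 l1 by blast
qed

lemma plus_lim_rho:
  assumes "r > 0"
  shows "((\<lambda>\<rho>. w_plus \<rho> r) \<longlongrightarrow> sqrt 3) at_top"
proof (rule Lim_transform_eventually)
  show "((\<lambda>\<rho>. phi (sqrt 3 / 2 + r\<^sup>2 / \<rho>\<^sup>2)) \<longlongrightarrow> sqrt 3) at_top"
    using tendsto_add[OF tendsto_const inv_sq_lim, of "sqrt 3 / 2" "r\<^sup>2"] by (intro phi_lim_c) simp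
  show "eventually (\<lambda>\<rho>. phi (sqrt 3 / 2 + r\<^sup>2 / \<rho>\<^sup>2) = w_plus \<rho> r) at_top"
    using eventually_gt_at_top[of 0] by eventually_elim (simp add: wplus_phi)
qed

lemma minus_props:
  assumes a: "a > 0"
  shows "solves_on (w_minus a) {0<..<b_end a}
        \<and> w_minus a a = 0
        \<and> (\<forall>r\<in>{0<..<b_end a}. w_minus a r < sqrt 3)
        \<and> (w_minus a \<longlongrightarrow> sqrt 3) (at_right 0)
        \<and> filterlim (w_minus a) at_bot (at_left (b_end a))"
proof -
  define k where "k = - (sqrt 3 / 2 / a\<^sup>2)"
  have k: "k < 0" using a by (simp add: k_def)
  have fe: "w_minus a = (\<lambda>r. phi (sqrt 3 / 2 + k * r\<^sup>2))"
  proof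
    fix r
    have "sqrt 3 / 2 * (1 - r\<^sup>2 / a\<^sup>2) = sqrt 3 / 2 + k * r\<^sup>2" unfolding k_def using a
      by (simp add: field_simps)
    thus "w_minus a r = phi (sqrt 3 / 2 + k * r\<^sup>2)" using wminus_phi[OF a, of r] by (simp only:)
  qed
  have kb: "k * (b_end a)\<^sup>2 = - (1 + sqrt 3 / 2)"
    unfolding b_sq[OF a] k_def using a by (simp add: field_simps)
  have ub: "-1 < sqrt 3 / 2 + k * r\<^sup>2 \<and> sqrt 3 / 2 + k * r\<^sup>2 < sqrt 3 / 2" if r: "r \<in> {0<..<b_end a}" for r
  proof -
    have "r\<^sup>2 < (b_end a)\<^sup>2" using r by (intro power_strict_mono) auto
    hence "k * r\<^sup>2 > k * (b_end a)\<^sup>2" using k by simp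
    moreover have "k * r\<^sup>2 < 0" using k r by (simp add: mult_neg_pos)
    ultimately show ?thesis unfolding kb by linarith
  qed
  have s: "solves_on (w_minus a) {0<..<b_end a}"
    unfolding fe by (rule solves_phi) (use ub c_bounds in fastforce)+
  have z: "w_minus a a = 0" unfolding w_minus_def by simp
  have g: "\<forall>r\<in>{0<..<b_end a}. w_minus a r < sqrt 3"
    unfolding fe using ub by (auto intro!: phi_lt)
  have l0: "(w_minus a \<longlongrightarrow> sqrt 3) (at_right 0)"
  proof -
    have "((\<lambda>r. sqrt 3 / 2 + k * r\<^sup>2) \<longlongrightarrow> sqrt 3 / 2 + k * 0\<^sup>2) (at_right 0)"
      by (intro tendsto_intros)
    thus ?thesis unfolding fe by (intro phi_lim_c) simp
  qed
  have l1: "filterlim (w_minus a) at_bot (at_left (b_end a))"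
    unfolding fe
  proof (rule phi_bot)
    have "((\<lambda>r. sqrt 3 / 2 + k * r\<^sup>2) \<longlongrightarrow> sqrt 3 / 2 + k * (b_end a)\<^sup>2) (at_left (b_end a))"
      by (intro tendsto_intros)
    thus "((\<lambda>r. sqrt 3 / 2 + k * r\<^sup>2) \<longlongrightarrow> -1) (at_left (b_end a))" unfolding kb by simp
    show "eventually (\<lambda>r. -1 < sqrt 3 / 2 + k * r\<^sup>2 \<and> sqrt 3 / 2 + k * r\<^sup>2 < 1) (at_left (b_end a))"
      using eventually_at_left_real[OF b_pos[OF a]] by eventually_elim (use ub c_bounds in fastforce)
  qed
  show ?thesis using s z g l0 l1 by blast
qed

lemma minus_lim_a:
  assumes "r > 0"
  shows "((\<lambda>a. w_minus a r) \<longlongrightarrow> sqrt 3) at_top"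
proof (rule Lim_transform_eventually)
  show "((\<lambda>a. phi (sqrt 3 / 2 * (1 - r\<^sup>2 / a\<^sup>2))) \<longlongrightarrow> sqrt 3) at_top"
    using tendsto_mult[OF tendsto_const tendsto_diff[OF tendsto_const inv_sq_lim], of "sqrt 3 / 2" 1 "r\<^sup>2"]
    by (intro phi_lim_c) simp
  show "eventually (\<lambda>a. phi (sqrt 3 / 2 * (1 - r\<^sup>2 / a\<^sup>2)) = w_minus a r) at_top"
    using eventually_gt_at_top[of 0] by eventually_elim (simp add: wminus_phi)
qed

lemma rho_param:
  assumes \<rho>: "\<rho> > 0" and a: "a > 0" and e: "a\<^sup>2 = sqrt 3 / 2 * \<rho>\<^sup>2"
  shows "b_end a = sqrt ((2 + sqrt 3) / 2) * \<rho>
        \<and> (\<forall>r. w_minus a r = - (r\<^sup>2 - sqrt 3 / 2 * \<rho>\<^sup>2) / sqrt (\<rho> ^ 4 - (r\<^sup>2 - sqrt 3 / 2 * \<rho>\<^sup>2)\<^sup>2))"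
proof
  have "(b_end a)\<^sup>2 = (sqrt ((2 + sqrt 3) / 2) * \<rho>)\<^sup>2"
    unfolding b_sq[OF a] e power_mult_distrib using sqrt3_pos by (simp add: field_simps)
  thus "b_end a = sqrt ((2 + sqrt 3) / 2) * \<rho>"
    by (rule power2_eq_imp_eq) (use b_pos[OF a] \<rho> in \<open>auto intro: add_pos_pos\<close>)
  show "\<forall>r. w_minus a r = - (r\<^sup>2 - sqrt 3 / 2 * \<rho>\<^sup>2) / sqrt (\<rho> ^ 4 - (r\<^sup>2 - sqrt 3 / 2 * \<rho>\<^sup>2)\<^sup>2)"
  proof
    fix r
    have e1: "- (r\<^sup>2 - sqrt 3 / 2 * \<rho>\<^sup>2) = - r\<^sup>2 + sqrt 3 / 2 * \<rho>\<^sup>2" by simp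
    have e2: "(r\<^sup>2 - sqrt 3 / 2 * \<rho>\<^sup>2)\<^sup>2 = (- r\<^sup>2 + sqrt 3 / 2 * \<rho>\<^sup>2)\<^sup>2" by (simp add: power2_commute)
    have e3: "sqrt 3 / 2 * (1 - r\<^sup>2 / a\<^sup>2) = sqrt 3 / 2 + - r\<^sup>2 / \<rho>\<^sup>2"
      unfolding e using \<rho> sqrt3_pos by (simp add: field_simps)
    show "w_minus a r = - (r\<^sup>2 - sqrt 3 / 2 * \<rho>\<^sup>2) / sqrt (\<rho> ^ 4 - (r\<^sup>2 - sqrt 3 / 2 * \<rho>\<^sup>2)\<^sup>2)"
      unfolding e1 e2 rho_phi[OF \<rho>] wminus_phi[OF a] e3 ..
  qed
qed


theorem theorem4p3:
  shows
  \<comment> \<open>classification: every solution on an open interval is a restriction of one listed\<close>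
  "(\<forall>w I. open I \<and> connected I \<and> I \<noteq> {} \<and> solves_on w I \<longrightarrow>
       (\<forall>r\<in>I. w r = sqrt 3)
     \<or> (\<exists>\<rho>>0. I \<subseteq> {0<..<r0 \<rho>} \<and> (\<forall>r\<in>I. w r = w_plus \<rho> r))
     \<or> (\<exists>a>0. I \<subseteq> {0<..<b_end a} \<and> (\<forall>r\<in>I. w r = w_minus a r)))
   \<comment> \<open>(1) the constant is a solution\<close>
   \<and> solves_on (\<lambda>_. sqrt 3) {0<..}
   \<comment> \<open>(2)\<close>
   \<and> (\<forall>\<rho>>0. solves_on (w_plus \<rho>) {0<..<r0 \<rho>}
        \<and> (\<forall>r\<in>{0<..<r0 \<rho>}. w_plus \<rho> r > sqrt 3)
        \<and> (w_plus \<rho> \<longlongrightarrow> sqrt 3) (at_right 0)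
        \<and> filterlim (w_plus \<rho>) at_top (at_left (r0 \<rho>)))
   \<and> (\<forall>r>0. ((\<lambda>\<rho>. w_plus \<rho> r) \<longlongrightarrow> sqrt 3) at_top)
   \<comment> \<open>(3)\<close>
   \<and> (\<forall>a>0. solves_on (w_minus a) {0<..<b_end a}
        \<and> w_minus a a = 0
        \<and> (\<forall>r\<in>{0<..<b_end a}. w_minus a r < sqrt 3)
        \<and> (w_minus a \<longlongrightarrow> sqrt 3) (at_right 0)
        \<and> filterlim (w_minus a) at_bot (at_left (b_end a)))
   \<and> (\<forall>r>0. ((\<lambda>a. w_minus a r) \<longlongrightarrow> sqrt 3) at_top)
   \<comment> \<open>equivalent rho0-parametrisation of family (3), with a^2 = (sqrt 3 / 2) rho0^2\<close>
   \<and> (\<forall>\<rho>>0. \<forall>a>0. a\<^sup>2 = sqrt 3 / 2 * \<rho>\<^sup>2 \<longrightarrow>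
        b_end a = sqrt ((2 + sqrt 3) / 2) * \<rho>
        \<and> (\<forall>r. w_minus a r = - (r\<^sup>2 - sqrt 3 / 2 * \<rho>\<^sup>2) / sqrt (\<rho> ^ 4 - (r\<^sup>2 - sqrt 3 / 2 * \<rho>\<^sup>2)\<^sup>2)))"
  proof (intro conjI)
  show "\<forall>w I. open I \<and> connected I \<and> I \<noteq> {} \<and> solves_on w I \<longrightarrow>
       (\<forall>r\<in>I. w r = sqrt 3)
     \<or> (\<exists>\<rho>>0. I \<subseteq> {0<..<r0 \<rho>} \<and> (\<forall>r\<in>I. w r = w_plus \<rho> r))
     \<or> (\<exists>a>0. I \<subseteq> {0<..<b_end a} \<and> (\<forall>r\<in>I. w r = w_minus a r))"
  proof (intro allI impI)
    fix w I assume h: "open I \<and> connected I \<and> I \<noteq> {} \<and> solves_on w (I :: real set)"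
    show "(\<forall>r\<in>I. w r = sqrt 3)
     \<or> (\<exists>\<rho>>0. I \<subseteq> {0<..<r0 \<rho>} \<and> (\<forall>r\<in>I. w r = w_plus \<rho> r))
     \<or> (\<exists>a>0. I \<subseteq> {0<..<b_end a} \<and> (\<forall>r\<in>I. w r = w_minus a r))"
      using h by (intro classify) auto
  qed
  show "solves_on (\<lambda>_. sqrt 3) {0<..}" by (rule const_sol)
  show "\<forall>\<rho>>0. solves_on (w_plus \<rho>) {0<..<r0 \<rho>}
        \<and> (\<forall>r\<in>{0<..<r0 \<rho>}. w_plus \<rho> r > sqrt 3)
        \<and> (w_plus \<rho> \<longlongrightarrow> sqrt 3) (at_right 0)
        \<and> filterlim (w_plus \<rho>) at_top (at_left (r0 \<rho>))"
    using plus_props by blast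
  show "\<forall>r>0. ((\<lambda>\<rho>. w_plus \<rho> r) \<longlongrightarrow> sqrt 3) at_top"
    using plus_lim_rho by blast
  show "\<forall>a>0. solves_on (w_minus a) {0<..<b_end a}
        \<and> w_minus a a = 0
        \<and> (\<forall>r\<in>{0<..<b_end a}. w_minus a r < sqrt 3)
        \<and> (w_minus a \<longlongrightarrow> sqrt 3) (at_right 0)
        \<and> filterlim (w_minus a) at_bot (at_left (b_end a))"
    using minus_props by blast
  show "\<forall>r>0. ((\<lambda>a. w_minus a r) \<longlongrightarrow> sqrt 3) at_top"
    using minus_lim_a by blast
  show "\<forall>\<rho>>0. \<forall>a>0. a\<^sup>2 = sqrt 3 / 2 * \<rho>\<^sup>2 \<longrightarrow>
        b_end a = sqrt ((2 + sqrt 3) / 2) * \<rho>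
        \<and> (\<forall>r. w_minus a r = - (r\<^sup>2 - sqrt 3 / 2 * \<rho>\<^sup>2) / sqrt (\<rho> ^ 4 - (r\<^sup>2 - sqrt 3 / 2 * \<rho>\<^sup>2)\<^sup>2))"
    using rho_param by blast
qed

end
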